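(* Let $g \ge h \ge 2$ be integers. There is a constant $C>0$ depending only on $g$ and $h$ such that for every infinite $C_h[g]$ set $A$ of positive integers, $$\liminf_{x \to \infty} A(x)\cdot \frac{(x\log x)^{1/h}}{x} \le C,$$ where $A(x) = |\{a \in A : a \le x\}|$ is the counting function of $A$.
   Context: A set of integers $A$ is called a $C_h[g]$ set if for every set $X$ of $h$ integers there do not exist $g$ distinct integers $k_1,\dots,k_g$ such that $X+k_i \subset A$ for all $i=1,\dots,g$ (here $X+k=\{x+k : x\in X\}$). In words, $A$ contains no $g$ distinct translates of a common $h$-element set. *)

theory Defs
  imports "HOL-Analysis.Analysis"
begin

definition Ch_set :: "nat \<Rightarrow> nat \<Rightarrow> int set \<Rightarrow> bool" where
  "Ch_set h g A \<longleftrightarrow>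
     \<not> (\<exists>X K. finite X \<and> card X = h \<and> finite K \<and> card K = g \<and>
              (\<forall>k\<in>K. (\<lambda>x. x + k) ` X \<subseteq> A))"

definition count_fn :: "int set \<Rightarrow> real \<Rightarrow> nat" where
  "count_fn A x = card {a \<in> A. real_of_int a \<le> x}"

end

theory Submission
  imports Defs
begin

definition shp :: "int set \<Rightarrow> nat set" where
  "shp X = (\<lambda>x. nat (x - Min X)) ` X"

lemma shp_inv:
  assumes "finite X" "X \<noteq> {}"
  shows "(\<lambda>s. int s + Min X) ` shp X = X"
proof -
  have "\<And>x. x \<in> X \<Longrightarrow> Min X \<le> x" using assms by simp
  then show ?thesis unfolding shp_def image_image by (auto intro!: image_eqI)
qed

lemma fiber_bound:
  assumes Ch: "Ch_set h g A" and F: "finite F" and g1: "1 \<le> g"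
    and FA: "\<forall>X\<in>F. X \<subseteq> A \<and> finite X \<and> X \<noteq> {} \<and> shp X = S" and hS: "card S = h"
  shows "card F < g"
proof (rule ccontr)
  assume "\<not> card F < g"
  then obtain F' where F': "F' \<subseteq> F" "card F' = g"
    by (metis not_less obtain_subset_with_card_n)
  have inj: "inj_on Min F'"
  proof
    fix X Y assume "X \<in> F'" "Y \<in> F'" "Min X = Min Y"
    then have "X \<in> F" "Y \<in> F" using F' by auto
    then have "X = (\<lambda>s. int s + Min X) ` S" "Y = (\<lambda>s. int s + Min Y) ` S"
      using shp_inv[of X] shp_inv[of Y] FA by auto
    then show "X = Y" using \<open>Min X = Min Y\<close> by simp
  qed
  have "F' \<noteq> {}" using F' g1 by (metis card.empty not_one_le_zero)
  then obtain X0 where X0: "X0 \<in> F'" by blast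
  have "X0 \<in> F" using X0 F' by auto
  then have fS: "finite S" using FA unfolding shp_def by auto
  have "\<exists>X K. finite X \<and> card X = h \<and> finite K \<and> card K = g \<and>
              (\<forall>k\<in>K. (\<lambda>x. x + k) ` X \<subseteq> A)"
  proof (intro exI conjI)
    show "finite (int ` S)" using fS by simp
    show "card (int ` S) = h" using hS by (simp add: card_image)
    show "finite (Min ` F')" using F' F finite_subset by blast
    show "card (Min ` F') = g" using inj F' by (simp add: card_image)
    show "\<forall>k\<in>Min ` F'. (\<lambda>x. x + k) ` int ` S \<subseteq> A"
    proof
      fix k assume "k \<in> Min ` F'"
      then obtain X where X: "X \<in> F'" "k = Min X" by blast
      then have XF: "X \<in> F" using F' by auto
      then have "(\<lambda>s. int s + Min X) ` S = X" using shp_inv[of X] FA by auto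
      then have "(\<lambda>x. x + k) ` int ` S = X" using X by (simp add: image_image add.commute)
      then show "(\<lambda>x. x + k) ` int ` S \<subseteq> A" using FA XF by auto
    qed
  qed
  then show False using Ch unfolding Ch_set_def by blast
qed
lemma card_Max_fiber:
  assumes h2: "2 \<le> h" and D: "1 \<le> D"
  shows "card {S. S \<subseteq> {0..M} \<and> 0 \<in> S \<and> card S = h \<and> Max S = D} \<le> D ^ (h-2)"
proof -
  let ?F = "{S. S \<subseteq> {0..M} \<and> 0 \<in> S \<and> card S = h \<and> Max S = D}"
  let ?T = "{Y. Y \<subseteq> {1..<D} \<and> card Y = h - 2}"
  have "inj_on (\<lambda>S. S - {0, D}) ?F"
  proof
    fix S T assume S: "S \<in> ?F" and T: "T \<in> ?F" and eq: "S - {0, D} = T - {0, D}"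
    have fS: "finite S" "finite T" using S T finite_subset by auto
    have "S \<noteq> {}" "T \<noteq> {}" using S T by auto
    then have "D \<in> S" "D \<in> T" using S T fS Max_in by fastforce+
    then have "S = (S - {0,D}) \<union> {0,D}" "T = (T - {0,D}) \<union> {0,D}" using S T by auto
    then show "S = T" using eq by metis
  qed
  moreover have "(\<lambda>S. S - {0, D}) ` ?F \<subseteq> ?T"
  proof
    fix Y assume "Y \<in> (\<lambda>S. S - {0, D}) ` ?F"
    then obtain S where S: "S \<in> ?F" and Y: "Y = S - {0, D}" by blast
    have fS: "finite S" using S finite_subset by auto
    have "S \<noteq> {}" using S by auto
    then have DS: "D \<in> S" using S fS Max_in by fastforce
    have le: "\<And>x. x \<in> S \<Longrightarrow> x \<le> D" using S fS by auto
    have "Y \<subseteq> {1..<D}" using le Y by fastforce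
    moreover have "card Y = h - 2" using S DS D fS Y by (simp add: card_Diff_subset)
    ultimately show "Y \<in> ?T" by blast
  qed
  ultimately have "card ?F \<le> card ?T"
    by (intro card_inj_on_le) auto
  also have "card ?T = (D - 1) choose (h - 2)" using n_subsets[of "{1..<D}" "h-2"] by simp
  also have "\<dots> \<le> D ^ (h - 2)"
  proof (cases "h - 2 \<le> D - 1")
    case True
    then have "(D - 1) choose (h - 2) \<le> (D - 1) ^ (h - 2)" by (rule binomial_le_pow)
    also have "\<dots> \<le> D ^ (h - 2)" by (simp add: power_mono)
    finally show ?thesis .
  next
    case False
    then show ?thesis by (simp add: binomial_eq_0)
  qed
  finally show ?thesis .
qed

lemma Sh_bound:
  assumes h2: "2 \<le> h"
  shows "(\<Sum>S\<in>{S. S \<subseteq> {0..M} \<and> 0 \<in> S \<and> card S = h}. 1 / real (Max S) ^ (h-1)) \<le> harm M"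
proof -
  let ?Sh = "{S. S \<subseteq> {0..M} \<and> 0 \<in> S \<and> card S = h}"
  let ?phi = "\<lambda>S. 1 / real (Max S) ^ (h-1)"
  have fin: "finite ?Sh" by (rule finite_subset[of _ "Pow {0..M}"]) auto
  have MaxD: "Max S \<in> {1..M}" if "S \<in> ?Sh" for S
  proof -
    have fS: "finite S" using that finite_subset by auto
    have "\<not> S \<subseteq> {0}"
    proof
      assume "S \<subseteq> {0}"
      then have "card S \<le> card {0::nat}" by (intro card_mono) auto
      then show False using that h2 by simp
    qed
    then obtain x where "x \<in> S" "x \<noteq> 0" by auto
    then have "x \<le> Max S" using fS by simp
    then have "1 \<le> Max S" using \<open>x \<noteq> 0\<close> by linarith
    moreover have "Max S \<in> S" using fS \<open>x \<in> S\<close> by (intro Max_in) auto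
    then have "Max S \<le> M" using that by auto
    ultimately show ?thesis by simp
  qed
  have "(\<Sum>S\<in>?Sh. ?phi S) = (\<Sum>D\<in>Max ` ?Sh. \<Sum>S\<in>{S. S \<in> ?Sh \<and> Max S = D}. ?phi S)"
    by (rule sum.image_gen[OF fin])
  also have "\<dots> \<le> (\<Sum>D\<in>Max ` ?Sh. 1 / real D)"
  proof (rule sum_mono)
    fix D assume "D \<in> Max ` ?Sh"
    then have D: "1 \<le> D" using MaxD by auto
    have "(\<Sum>S\<in>{S. S \<in> ?Sh \<and> Max S = D}. ?phi S) = (\<Sum>S\<in>{S. S \<in> ?Sh \<and> Max S = D}. 1 / real D ^ (h-1))"
      by (rule sum.cong) auto
    also have "\<dots> = real (card {S. S \<in> ?Sh \<and> Max S = D}) * (1 / real D ^ (h-1))" by simp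
    also have "\<dots> \<le> real (D ^ (h-2)) * (1 / real D ^ (h-1))"
    proof (rule mult_right_mono)
      have "{S. S \<in> ?Sh \<and> Max S = D} = {S. S \<subseteq> {0..M} \<and> 0 \<in> S \<and> card S = h \<and> Max S = D}" by auto
      then show "real (card {S. S \<in> ?Sh \<and> Max S = D}) \<le> real (D ^ (h-2))"
        using card_Max_fiber[OF h2 D, of M] by simp
    qed simp
    also have "\<dots> = 1 / real D"
    proof -
      have "h - 1 = Suc (h - 2)" using h2 by simp
      then show ?thesis using D by (simp add: field_simps)
    qed
    finally show "(\<Sum>S\<in>{S. S \<in> ?Sh \<and> Max S = D}. ?phi S) \<le> 1 / real D" .
  qed
  also have "\<dots> \<le> (\<Sum>D\<in>{1..M}. 1 / real D)"
    by (rule sum_mono2) (use MaxD in auto)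
  also have "\<dots> = harm M" unfolding harm_def by (simp add: divide_inverse)
  finally show ?thesis .
qed

lemma shp_props:
  assumes fX: "finite X" and cX: "card X = h" and h2: "2 \<le> h" and M: "Max X - Min X \<le> int M"
  shows "card (shp X) = h" "shp X \<subseteq> {0..M}" "0 \<in> shp X" "Max (shp X) = nat (Max X - Min X)"
proof -
  have ne: "X \<noteq> {}" using cX h2 by auto
  have lo: "\<And>x. x \<in> X \<Longrightarrow> Min X \<le> x" and hi: "\<And>x. x \<in> X \<Longrightarrow> x \<le> Max X" using fX ne by auto
  have "inj_on (\<lambda>x. nat (x - Min X)) X"
  proof (rule inj_onI)
    fix x y assume "x \<in> X" "y \<in> X" "nat (x - Min X) = nat (y - Min X)"
    then show "x = y" using lo[of x] lo[of y] by linarith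
  qed
  then show "card (shp X) = h" unfolding shp_def using cX by (simp add: card_image)
  show "shp X \<subseteq> {0..M}" unfolding shp_def using lo hi M by fastforce
  show "0 \<in> shp X" unfolding shp_def using Min_in[OF fX ne] by force
  have "mono (\<lambda>x. nat (x - Min X))" by (rule monoI) simp
  from mono_Max_commute[OF this fX ne] show "Max (shp X) = nat (Max X - Min X)"
    unfolding shp_def by simp
qed

lemma shape_sum_bound:
  assumes Ch: "Ch_set h g A" and h2: "2 \<le> h" and g1: "1 \<le> g" and F: "finite F"
    and FA: "\<forall>X\<in>F. X \<subseteq> A \<and> finite X \<and> card X = h \<and> Max X - Min X \<le> int M"
  shows "(\<Sum>X\<in>F. 1 / real_of_int (Max X - Min X) ^ (h-1)) \<le> real (g-1) * harm M"
proof -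
  let ?Sh = "{S. S \<subseteq> {0..M} \<and> 0 \<in> S \<and> card S = h}"
  let ?phi = "\<lambda>S. 1 / real (Max S) ^ (h-1)"
  have fin: "finite ?Sh" by (rule finite_subset[of _ "Pow {0..M}"]) auto
  have "(\<Sum>X\<in>F. 1 / real_of_int (Max X - Min X) ^ (h-1)) = (\<Sum>X\<in>F. ?phi (shp X))"
  proof (rule sum.cong)
    fix X assume "X \<in> F"
    then have "Max (shp X) = nat (Max X - Min X)" "X \<noteq> {}" "finite X"
      using shp_props(4)[of X h M] FA h2 by auto
    moreover have "Min X \<le> Max X" using calculation(2,3) by (meson Max_ge Min_in order_trans Min_le)
    ultimately show "1 / real_of_int (Max X - Min X) ^ (h-1) = ?phi (shp X)" by simp
  qed simp
  also have "\<dots> = (\<Sum>S\<in>shp ` F. \<Sum>X\<in>{X. X \<in> F \<and> shp X = S}. ?phi (shp X))"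
    by (rule sum.image_gen[OF F])
  also have "\<dots> \<le> (\<Sum>S\<in>shp ` F. real (g-1) * ?phi S)"
  proof (rule sum_mono)
    fix S assume S: "S \<in> shp ` F"
    then obtain X0 where "X0 \<in> F" "S = shp X0" by blast
    then have "X0 \<subseteq> A \<and> finite X0 \<and> card X0 = h \<and> Max X0 - Min X0 \<le> int M" using FA by blast
    then have cS: "card S = h" using shp_props(1)[of X0 h M] h2 \<open>S = shp X0\<close> by blast
    have "card {X. X \<in> F \<and> shp X = S} < g"
    proof (rule fiber_bound[OF Ch _ g1 _ cS])
      show "finite {X. X \<in> F \<and> shp X = S}" using F by simp
      show "\<forall>X\<in>{X. X \<in> F \<and> shp X = S}. X \<subseteq> A \<and> finite X \<and> X \<noteq> {} \<and> shp X = S"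
      proof
        fix X assume "X \<in> {X. X \<in> F \<and> shp X = S}"
        then have "X \<in> F" "shp X = S" by auto
        then have "X \<subseteq> A \<and> finite X \<and> card X = h" using FA by blast
        then show "X \<subseteq> A \<and> finite X \<and> X \<noteq> {} \<and> shp X = S" using h2 \<open>shp X = S\<close> by auto
      qed
    qed
    then have "real (card {X. X \<in> F \<and> shp X = S}) \<le> real (g - 1)" by simp
    moreover have "(\<Sum>X\<in>{X. X \<in> F \<and> shp X = S}. ?phi (shp X)) = real (card {X. X \<in> F \<and> shp X = S}) * ?phi S"
      by simp
    moreover have "real (card {X. X \<in> F \<and> shp X = S}) * ?phi S \<le> real (g-1) * ?phi S"
      using calculation(1) by (intro mult_right_mono) simp_all
    ultimately show "(\<Sum>X\<in>{X. X \<in> F \<and> shp X = S}. ?phi (shp X)) \<le> real (g-1) * ?phi S"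
      by linarith
  qed
  also have "\<dots> = real (g-1) * (\<Sum>S\<in>shp ` F. ?phi S)" by (simp add: sum_distrib_left)
  also have "\<dots> \<le> real (g-1) * (\<Sum>S\<in>?Sh. ?phi S)"
  proof (rule mult_left_mono)
    show "(\<Sum>S\<in>shp ` F. ?phi S) \<le> (\<Sum>S\<in>?Sh. ?phi S)"
    proof (rule sum_mono2[OF fin])
      show "shp ` F \<subseteq> ?Sh"
      proof
        fix S assume "S \<in> shp ` F"
        then obtain X where X: "X \<in> F" "S = shp X" by blast
        then have "finite X" "card X = h" "Max X - Min X \<le> int M" using FA by blast+
        from shp_props[OF this(1,2) h2 this(3)] show "S \<in> ?Sh" using X by blast
      qed
    qed simp
  qed simp
  also have "\<dots> \<le> real (g-1) * harm M"
    by (rule mult_left_mono[OF Sh_bound[OF h2]]) simp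
  finally show ?thesis .
qed

lemma markov_inv:
  fixes x :: "nat \<Rightarrow> real" and p :: nat
  assumes S: "finite S" and pos: "\<forall>j\<in>S. 0 < x j" and sum: "(\<Sum>j\<in>S. x j) \<le> B" and B: "0 < B"
  shows "(real (card S) / 2) * (real (card S) / (2*B)) ^ p \<le> (\<Sum>j\<in>S. 1 / x j ^ p)"
proof (cases "S = {}")
  case True then show ?thesis by simp
next
  case False
  let ?n = "real (card S)"
  have n: "0 < ?n" using S False by (simp add: card_gt_0_iff)
  define T where "T = 2 * B / ?n"
  have T: "0 < T" using B n by (simp add: T_def)
  let ?G = "{j\<in>S. x j \<le> T}"
  have "real (card (S - ?G)) * T = (\<Sum>j\<in>S - ?G. T)" by simp
  also have "\<dots> \<le> (\<Sum>j\<in>S - ?G. x j)" by (rule sum_mono) auto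
  also have "\<dots> \<le> (\<Sum>j\<in>S. x j)" by (rule sum_mono2) (use S pos in \<open>auto intro: less_imp_le\<close>)
  also have "\<dots> \<le> B" by (rule sum)
  finally have "real (card (S - ?G)) * T \<le> B" .
  then have c1: "real (card (S - ?G)) \<le> ?n / 2" using n B unfolding T_def by (simp add: field_simps)
  have "card S = card ?G + card (S - ?G)" using S by (metis (no_types, lifting) card_Diff_subset
      card_mono le_add_diff_inverse mem_Collect_eq subsetI finite_subset)
  then have cG: "?n / 2 \<le> real (card ?G)" using c1 by simp
  have "(?n / 2) * (?n / (2*B)) ^ p \<le> real (card ?G) * (1 / T ^ p)"
    using cG B by (intro mult_mono) (simp_all add: T_def power_divide)
  also have "\<dots> = (\<Sum>j\<in>?G. 1 / T ^ p)" by simp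
  also have "\<dots> \<le> (\<Sum>j\<in>?G. 1 / x j ^ p)"
  proof (rule sum_mono)
    fix j assume "j \<in> ?G"
    then have "0 < x j" "x j \<le> T" using pos by auto
    then show "1 / T ^ p \<le> 1 / x j ^ p"
      by (intro divide_left_mono power_mono) simp_all
  qed
  also have "\<dots> \<le> (\<Sum>j\<in>S. 1 / x j ^ p)"
    by (rule sum_mono2) (use S pos in auto)
  finally show ?thesis .
qed

lemma telescope_bound:
  fixes ar :: "nat \<Rightarrow> real"
  assumes mono: "mono ar" and nn: "\<forall>n. 0 \<le> ar n"
  shows "r \<le> m \<Longrightarrow> (\<Sum>j\<in>{m..<2*m}. ar (j+r) - ar j) \<le> real r * ar (3*m)"
proof (induction r)
  case 0 then show ?case by simp
next
  case (Suc r)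
  have "(\<Sum>j\<in>{m..<2*m}. ar (j + Suc r) - ar j) =
        (\<Sum>j\<in>{m..<2*m}. ar (j+r) - ar j) + (\<Sum>j\<in>{m..<2*m}. ar (Suc j + r) - ar (j + r))"
    by (simp add: sum.distrib[symmetric])
  also have "(\<Sum>j\<in>{m..<2*m}. ar (Suc j + r) - ar (j + r)) = ar (2*m + r) - ar (m + r)"
    using sum_Suc_diff'[of m "2*m" "\<lambda>i. ar (i + r)"] by simp
  also have "\<dots> \<le> ar (3*m)"
  proof -
    have "ar (2*m + r) \<le> ar (3*m)" using Suc.prems by (intro monoD[OF mono]) simp
    then show ?thesis using nn by (smt (verit))
  qed
  finally show ?case using Suc by (simp add: algebra_simps)
qed

lemma block_bound:
  fixes ar :: "nat \<Rightarrow> real"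
  assumes sm: "strict_mono ar" and nn: "\<forall>n. 0 \<le> ar n" and m: "1 \<le> m"
  shows "(\<Sum>r\<in>{1..m}. real ((r-1) choose (h-2)) * ((real m / 2) * (real m / (2 * (real r * ar (3*m)))) ^ (h-1)))
    \<le> (\<Sum>j\<in>{m..<2*m}. \<Sum>r\<in>{1..j}. real ((r-1) choose (h-2)) / (ar (j+r) - ar j) ^ (h-1))"
proof -
  have pos: "0 < ar (j + r) - ar j" if "1 \<le> r" for j r
    using sm that unfolding strict_mono_def by simp
  have "ar 0 < ar (3*m)" using sm m unfolding strict_mono_def by simp
  then have a3: "0 < ar (3*m)" using nn by (smt (verit))
  have "(\<Sum>r\<in>{1..m}. real ((r-1) choose (h-2)) * ((real m / 2) * (real m / (2 * (real r * ar (3*m)))) ^ (h-1)))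
      \<le> (\<Sum>r\<in>{1..m}. \<Sum>j\<in>{m..<2*m}. real ((r-1) choose (h-2)) / (ar (j+r) - ar j) ^ (h-1))"
  proof (rule sum_mono)
    fix r assume r: "r \<in> {1..m}"
    have "(real (card {m..<2*m}) / 2) * (real (card {m..<2*m}) / (2 * (real r * ar (3*m)))) ^ (h-1)
        \<le> (\<Sum>j\<in>{m..<2*m}. 1 / (ar (j+r) - ar j) ^ (h-1))"
    proof (rule markov_inv)
      show "\<forall>j\<in>{m..<2 * m}. 0 < ar (j + r) - ar j" using pos r by auto
      show "(\<Sum>j\<in>{m..<2*m}. ar (j + r) - ar j) \<le> real r * ar (3 * m)"
        using telescope_bound[of ar r m] sm nn r strict_mono_mono by auto
      show "0 < real r * ar (3 * m)" using a3 r by simp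
    qed simp
    moreover have cm: "real (card {m..<2*m}) = real m" by simp
    ultimately have "(real m / 2) * (real m / (2 * (real r * ar (3*m)))) ^ (h-1)
        \<le> (\<Sum>j\<in>{m..<2*m}. 1 / (ar (j+r) - ar j) ^ (h-1))" by (simp only: cm)
    then have "real ((r-1) choose (h-2)) * ((real m / 2) * (real m / (2 * (real r * ar (3*m)))) ^ (h-1))
        \<le> real ((r-1) choose (h-2)) * (\<Sum>j\<in>{m..<2*m}. 1 / (ar (j+r) - ar j) ^ (h-1))"
      by (rule mult_left_mono) simp
    also have "\<dots> = (\<Sum>j\<in>{m..<2*m}. real ((r-1) choose (h-2)) / (ar (j+r) - ar j) ^ (h-1))"
      by (simp add: sum_distrib_left)
    finally show "real ((r-1) choose (h-2)) * ((real m / 2) * (real m / (2 * (real r * ar (3*m)))) ^ (h-1))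
        \<le> (\<Sum>j\<in>{m..<2*m}. real ((r-1) choose (h-2)) / (ar (j+r) - ar j) ^ (h-1))" .
  qed
  also have "\<dots> = (\<Sum>j\<in>{m..<2*m}. \<Sum>r\<in>{1..m}. real ((r-1) choose (h-2)) / (ar (j+r) - ar j) ^ (h-1))"
    by (rule sum.swap)
  also have "\<dots> \<le> (\<Sum>j\<in>{m..<2*m}. \<Sum>r\<in>{1..j}. real ((r-1) choose (h-2)) / (ar (j+r) - ar j) ^ (h-1))"
  proof (rule sum_mono)
    fix j assume "j \<in> {m..<2*m}"
    then show "(\<Sum>r\<in>{1..m}. real ((r-1) choose (h-2)) / (ar (j+r) - ar j) ^ (h-1))
        \<le> (\<Sum>r\<in>{1..j}. real ((r-1) choose (h-2)) / (ar (j+r) - ar j) ^ (h-1))"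
      by (intro sum_mono2) (auto intro!: divide_nonneg_pos zero_less_power pos)
  qed
  finally show ?thesis .
qed

lemma harm_le_ln: "n \<ge> 1 \<Longrightarrow> harm n \<le> 1 + ln (real n)"
proof (induction n rule: nat_induct_at_least)
  case base then show ?case by (simp add: harm_def)
next
  case (Suc n)
  have n: "0 < real n" using Suc by simp
  have "ln (real n / real (Suc n)) \<le> real n / real (Suc n) - 1"
    by (rule ln_le_minus_one) (use n in simp)
  then have "ln (real n) - ln (real (Suc n)) \<le> - 1 / real (Suc n)"
    using n by (simp add: ln_div field_simps)
  then have "inverse (real (Suc n)) \<le> ln (real (Suc n)) - ln (real n)" by (simp add: field_simps)
  then show ?case using Suc.IH by (simp add: harm_Suc)
qed

lemma ln_crude:
  fixes a Y :: real
  assumes a: "1 \<le> a" and Y: "1 \<le> Y" and le: "a \<le> Y * ln a"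
  shows "ln a \<le> 2 * ln (2 * Y)"
proof -
  have sa: "0 < sqrt a" using a by simp
  have "ln (sqrt a) \<le> sqrt a - 1" by (rule ln_le_minus_one[OF sa])
  then have "ln a \<le> 2 * sqrt a" using a ln_sqrt[of a] by simp
  then have "a \<le> Y * (2 * sqrt a)" using le Y by (smt (verit) mult_left_mono)
  moreover have "sqrt a * sqrt a = a" using a by simp
  ultimately have "sqrt a * sqrt a \<le> (2 * Y) * sqrt a" by simp
  then have "sqrt a \<le> 2 * Y" using sa by (rule mult_right_le_imp_le)
  then have "ln (sqrt a) \<le> ln (2 * Y)" using sa Y by (subst ln_le_cancel_iff) auto
  then show ?thesis using a ln_sqrt[of a] by simp
qed

lemma binom_harm:
  fixes m h :: nat
  defines "q \<equiv> h - 2"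
  defines "b \<equiv> (2 * real q) ^ q"
  assumes lnm: "2 * real h \<le> ln (real m)" and h2: "2 \<le> h"
  shows "ln (real m) / (2 * b) \<le> (\<Sum>r\<in>{1..m}. real ((r-1) choose (h-2)) / real r ^ (h-1))"
proof -
  have b1: "1 \<le> b"
  proof (cases "q = 0")
    case True then show ?thesis by (simp add: b_def)
  next
    case False
    then have "1 \<le> 2 * real q" by simp
    then show ?thesis unfolding b_def by (rule one_le_power)
  qed
  have m1: "q + 1 \<le> m"
  proof (rule ccontr)
    assume "\<not> q + 1 \<le> m"
    then have "real m \<le> real h" unfolding q_def by simp
    moreover have "0 < real m" using lnm h2 by (cases "m = 0") auto
    ultimately have "ln (real m) \<le> ln (real h)" by simp
    also have "\<dots> < real h" using ln_less_self[of "real h"] h2 by simp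
    finally show False using lnm h2 by simp
  qed
  have tm: "1 / (b * real r) \<le> real ((r-1) choose (h-2)) / real r ^ (h-1)" if r: "q + 2 \<le> r" for r
  proof -
    have "real (r - 1) / real q \<ge> real r / (2 * real q)"
      using r by (cases "q = 0") (auto simp: field_simps)
    then have "(real r / (2 * real q)) ^ q \<le> (real (r - 1) / real q) ^ q"
      by (intro power_mono) auto
    also have "\<dots> \<le> real ((r-1) choose q)" using r by (intro binomial_ge_n_over_k_pow_k) simp
    finally have c: "(real r / (2 * real q)) ^ q \<le> real ((r-1) choose (h-2))" unfolding q_def .
    have hq: "h - 1 = Suc q" using h2 unfolding q_def by simp
    have rp: "0 < real r" using r by simp
    have "1 / (b * real r) = (real r / (2 * real q)) ^ q / real r ^ (h-1)"
      using rp unfolding b_def hq by (simp add: power_divide field_simps)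
    also have "\<dots> \<le> real ((r-1) choose (h-2)) / real r ^ (h-1)"
      using c rp by (intro divide_right_mono) auto
    finally show ?thesis .
  qed
  have split: "{1..m} = {1..q+1} \<union> {q+2..m}" using m1 by auto
  have "harm m = (\<Sum>r\<in>{1..m}. 1 / real r)" unfolding harm_def by (simp add: divide_inverse)
  also have "\<dots> = (\<Sum>r\<in>{1..q+1}. 1 / real r) + (\<Sum>r\<in>{q+2..m}. 1 / real r)"
    unfolding split by (rule sum.union_disjoint) auto
  also have "(\<Sum>r\<in>{1..q+1}. 1 / real r) \<le> real (card {1..q+1}) * 1"
    by (rule sum_bounded_above) auto
  finally have "harm m \<le> real (q + 1) + (\<Sum>r\<in>{q+2..m}. 1 / real r)" by simp
  moreover have "ln (real m + 1) \<le> harm m" by (rule ln_le_harm)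
  moreover have "ln (real m) \<le> ln (real m + 1)" using m1 by simp
  ultimately have "ln (real m) - real (q + 1) \<le> (\<Sum>r\<in>{q+2..m}. 1 / real r)" by simp
  moreover have "real (q + 1) \<le> ln (real m) / 2" using lnm h2 unfolding q_def by simp
  ultimately have H: "ln (real m) / 2 \<le> (\<Sum>r\<in>{q+2..m}. 1 / real r)" by simp
  have "ln (real m) / (2 * b) = (ln (real m) / 2) / b" by simp
  also have "\<dots> \<le> (\<Sum>r\<in>{q+2..m}. 1 / real r) / b" using H b1 by (intro divide_right_mono) auto
  also have "\<dots> = (\<Sum>r\<in>{q+2..m}. 1 / (b * real r))" by (simp add: sum_divide_distrib mult.commute)
  also have "\<dots> \<le> (\<Sum>r\<in>{q+2..m}. real ((r-1) choose (h-2)) / real r ^ (h-1))"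
    by (rule sum_mono) (use tm in auto)
  also have "\<dots> \<le> (\<Sum>r\<in>{1..m}. real ((r-1) choose (h-2)) / real r ^ (h-1))"
    by (rule sum_mono2) auto
  finally show ?thesis .
qed

lemma J_props:
  fixes j r :: nat
  assumes r: "1 \<le> r" and Y: "Y \<subseteq> {j+1..<j+r}" and cY: "card Y = h-2" and h2: "2 \<le> h"
  shows "finite (insert j (insert (j+r) Y))" "card (insert j (insert (j+r) Y)) = h"
    "Min (insert j (insert (j+r) Y)) = j" "Max (insert j (insert (j+r) Y)) = j + r"
    "Y = insert j (insert (j+r) Y) - {j, j+r}"
proof -
  have fY: "finite Y" by (rule finite_subset[OF Y]) simp
  then show "finite (insert j (insert (j+r) Y))" by simp
  have bnd: "j < y \<and> y < j + r" if "y \<in> Y" for y using Y that by (auto simp: subset_iff Suc_le_eq)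
  have jY: "j \<notin> Y" using bnd by blast
  have jrY: "j + r \<notin> Y" using bnd by blast
  have jjr: "j \<noteq> j + r" using r by simp
  show "card (insert j (insert (j+r) Y)) = h" using fY cY h2 jY jrY jjr by simp
  show "Min (insert j (insert (j+r) Y)) = j"
  proof (rule Min_eqI)
    show "finite (insert j (insert (j+r) Y))" using fY by simp
    fix y assume "y \<in> insert j (insert (j+r) Y)"
    then show "j \<le> y" using bnd by fastforce
  qed simp
  show "Max (insert j (insert (j+r) Y)) = j + r"
  proof (rule Max_eqI)
    show "finite (insert j (insert (j+r) Y))" using fY by simp
    fix y assume "y \<in> insert j (insert (j+r) Y)"
    then show "y \<le> j + r" using bnd by fastforce
  qed simp
  show "Y = insert j (insert (j+r) Y) - {j, j+r}" using jY jrY by blast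
qed

lemma family_upper:
  fixes a :: "nat \<Rightarrow> int"
  assumes Ch: "Ch_set h g A" and h2: "2 \<le> h" and g1: "1 \<le> g" and sm: "strict_mono a"
    and aA: "\<forall>n. a n \<in> A" and apos: "\<forall>n. 0 \<le> a n"
  shows "(\<Sum>j\<in>{N0..<N1}. \<Sum>r\<in>{1..j}. real ((r-1) choose (h-2)) / real_of_int (a (j+r) - a j) ^ (h-1))
    \<le> real (g-1) * harm (nat (a (2*N1)))"
proof -
  define YS where "YS j r = {Y. Y \<subseteq> {j+1..<j+r} \<and> card Y = h-2}" for j r :: nat
  define I where "I = (SIGMA j:{N0..<N1}. SIGMA r:{1..j}. YS j r)"
  define JJ where "JJ i = insert (fst i) (insert (fst i + fst (snd i)) (snd (snd i)))" for i :: "nat \<times> nat \<times> nat set"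
  define \<Phi> where "\<Phi> i = a ` JJ i" for i
  define w where "w i = 1 / real_of_int (a (fst i + fst (snd i)) - a (fst i)) ^ (h-1)" for i :: "nat \<times> nat \<times> nat set"
  have finYS: "finite (YS j r)" for j r unfolding YS_def by (rule finite_subset[of _ "Pow {j+1..<j+r}"]) auto
  have finI: "finite I" unfolding I_def using finYS by (intro finite_SigmaI) auto
  have Iprops: "1 \<le> r \<and> Y \<subseteq> {j+1..<j+r} \<and> card Y = h-2 \<and> j < N1 \<and> r \<le> j" if "(j, r, Y) \<in> I" for j r Y
    using that unfolding I_def YS_def by auto
  have injA: "inj a" using sm by (rule strict_mono_imp_inj_on)
  have monoA: "mono a" using sm by (rule strict_mono_mono)
  have Jfacts: "finite (JJ i) \<and> card (JJ i) = h \<and> Min (JJ i) = fst i \<and> Max (JJ i) = fst i + fst (snd i)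
      \<and> snd (snd i) = JJ i - {fst i, fst i + fst (snd i)} \<and> JJ i \<noteq> {}" if "i \<in> I" for i
  proof -
    obtain j r Y where i: "i = (j, r, Y)" by (cases i) auto
    then have P: "1 \<le> r" "Y \<subseteq> {j+1..<j+r}" "card Y = h-2" using Iprops that by auto
    show ?thesis using J_props[OF P h2] unfolding i JJ_def by auto
  qed
  have Phifacts: "\<Phi> i \<subseteq> A \<and> finite (\<Phi> i) \<and> card (\<Phi> i) = h \<and> Min (\<Phi> i) = a (fst i)
      \<and> Max (\<Phi> i) = a (fst i + fst (snd i))" if "i \<in> I" for i
  proof -
    from Jfacts[OF that] have J: "finite (JJ i)" "card (JJ i) = h" "Min (JJ i) = fst i"
      "Max (JJ i) = fst i + fst (snd i)" "JJ i \<noteq> {}" by auto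
    have "card (\<Phi> i) = h" unfolding \<Phi>_def using J injA by (simp add: card_image inj_on_subset)
    moreover have "Min (\<Phi> i) = a (fst i)" unfolding \<Phi>_def using mono_Min_commute[OF monoA J(1) J(5)] J(3) by simp
    moreover have "Max (\<Phi> i) = a (fst i + fst (snd i))" unfolding \<Phi>_def using mono_Max_commute[OF monoA J(1) J(5)] J(4) by simp
    ultimately show ?thesis unfolding \<Phi>_def using aA J(1) by auto
  qed
  have injPhi: "inj_on \<Phi> I"
  proof
    fix i i' assume ii: "i \<in> I" "i' \<in> I" "\<Phi> i = \<Phi> i'"
    then have "JJ i = JJ i'" unfolding \<Phi>_def using injA by (simp add: inj_image_eq_iff)
    have A1: "Min (JJ i) = fst i" and A2: "Max (JJ i) = fst i + fst (snd i)"
      and A3: "snd (snd i) = JJ i - {fst i, fst i + fst (snd i)}" using Jfacts[OF ii(1)] by blast+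
    have B1: "Min (JJ i') = fst i'" and B2: "Max (JJ i') = fst i' + fst (snd i')"
      and B3: "snd (snd i') = JJ i' - {fst i', fst i' + fst (snd i')}" using Jfacts[OF ii(2)] by blast+
    have 1: "fst i = fst i'" using A1 B1 \<open>JJ i = JJ i'\<close> by simp
    have 2: "fst (snd i) = fst (snd i')" using A2 B2 \<open>JJ i = JJ i'\<close> 1 by simp
    have 3: "snd (snd i) = snd (snd i')" using A3 B3 \<open>JJ i = JJ i'\<close> 1 2 by simp
    show "i = i'" using 1 2 3 by (simp add: prod_eq_iff)
  qed
  have "(\<Sum>j\<in>{N0..<N1}. \<Sum>r\<in>{1..j}. real ((r-1) choose (h-2)) / real_of_int (a (j+r) - a j) ^ (h-1))
      = (\<Sum>j\<in>{N0..<N1}. \<Sum>r\<in>{1..j}. \<Sum>Y\<in>YS j r. w (j, r, Y))"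
  proof (intro sum.cong refl)
    fix j r
    have "card {j+1..<j+r} = r - 1" by simp
    then have c: "card (YS j r) = (r-1) choose (h-2)" unfolding YS_def using n_subsets[of "{j+1..<j+r}" "h-2"] by simp
    have s: "(\<Sum>Y\<in>YS j r. w (j, r, Y)) = real (card (YS j r)) * (1 / real_of_int (a (j+r) - a j) ^ (h-1))"
      unfolding w_def by simp
    show "real ((r-1) choose (h-2)) / real_of_int (a (j+r) - a j) ^ (h-1) = (\<Sum>Y\<in>YS j r. w (j, r, Y))"
      unfolding s c by (simp only: times_divide_eq_right mult_1_right)
  qed
  also have "\<dots> = (\<Sum>j\<in>{N0..<N1}. \<Sum>p\<in>(SIGMA r:{1..j}. YS j r). w (j, p))"
  proof (intro sum.cong refl)
    fix j
    have "(\<Sum>r\<in>{1..j}. \<Sum>Y\<in>YS j r. w (j, r, Y)) = (\<Sum>(r,Y)\<in>(SIGMA r:{1..j}. YS j r). w (j, r, Y))"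
      by (rule sum.Sigma) (auto simp: finYS)
    also have "\<dots> = (\<Sum>p\<in>(SIGMA r:{1..j}. YS j r). w (j, p))" by (simp add: case_prod_unfold)
    finally show "(\<Sum>r\<in>{1..j}. \<Sum>Y\<in>YS j r. w (j, r, Y)) = (\<Sum>p\<in>(SIGMA r:{1..j}. YS j r). w (j, p))" .
  qed
  also have "\<dots> = (\<Sum>(j,p)\<in>I. w (j, p))"
    unfolding I_def by (rule sum.Sigma) (auto simp: finYS intro!: finite_SigmaI)
  also have "\<dots> = (\<Sum>i\<in>I. w i)" by (simp add: case_prod_unfold)
  also have "\<dots> = (\<Sum>i\<in>I. 1 / real_of_int (Max (\<Phi> i) - Min (\<Phi> i)) ^ (h-1))"
  proof (intro sum.cong refl)
    fix i assume "i \<in> I"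
    from Phifacts[OF this] have m1: "Min (\<Phi> i) = a (fst i)" and m2: "Max (\<Phi> i) = a (fst i + fst (snd i))"
      by blast+
    show "w i = 1 / real_of_int (Max (\<Phi> i) - Min (\<Phi> i)) ^ (h-1)"
      unfolding w_def m1 m2 by (rule refl)
  qed
  also have "\<dots> = (\<Sum>X\<in>\<Phi> ` I. 1 / real_of_int (Max X - Min X) ^ (h-1))"
    by (simp add: sum.reindex[OF injPhi])
  also have "\<dots> \<le> real (g-1) * harm (nat (a (2*N1)))"
  proof (rule shape_sum_bound[OF Ch h2 g1])
    show "finite (\<Phi> ` I)" using finI by simp
    show "\<forall>X\<in>\<Phi> ` I. X \<subseteq> A \<and> finite X \<and> card X = h \<and> Max X - Min X \<le> int (nat (a (2 * N1)))"
    proof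
      fix X assume "X \<in> \<Phi> ` I"
      then obtain i where i: "i \<in> I" "X = \<Phi> i" by blast
      obtain j r Y where ijr: "i = (j, r, Y)" by (cases i) auto
      have "r \<le> j" "j < N1" using Iprops i ijr by auto
      then have "a (j + r) \<le> a (2*N1)" by (intro monoD[OF monoA]) simp
      moreover have "0 \<le> a j" using apos by blast
      ultimately have "a (j + r) - a j \<le> int (nat (a (2 * N1)))" by linarith
      moreover have P: "\<Phi> i \<subseteq> A" "finite (\<Phi> i)" "card (\<Phi> i) = h" "Min (\<Phi> i) = a j" "Max (\<Phi> i) = a (j + r)"
        using Phifacts[OF i(1)] unfolding ijr by simp_all
      ultimately show "X \<subseteq> A \<and> finite X \<and> card X = h \<and> Max X - Min X \<le> int (nat (a (2 * N1)))"
        unfolding i(2) by simp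
    qed
  qed
  finally show ?thesis .
qed

lemma enum_exists:
  assumes Apos: "A \<subseteq> {0<..}" and inf: "infinite A"
  obtains a :: "nat \<Rightarrow> int" where "strict_mono a" "\<forall>n. a n \<in> A" "\<forall>x\<in>A. \<exists>n. a n = x"
proof -
  define B where "B = nat ` A"
  have inj: "inj_on nat A"
  proof (rule inj_onI)
    fix x y assume "x \<in> A" "y \<in> A" "nat x = nat y"
    then show "x = y" using Apos by force
  qed
  have infB: "infinite B" unfolding B_def using inj inf finite_image_iff by blast
  define a where "a n = int (enumerate B n)" for n
  have "strict_mono a" unfolding strict_mono_def a_def using infB by (simp add: enumerate_mono)
  moreover have "\<forall>n. a n \<in> A"
  proof
    fix n
    have "enumerate B n \<in> B" using infB by (rule enumerate_in_set)
    then obtain x where "x \<in> A" "enumerate B n = nat x" unfolding B_def by blast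
    then show "a n \<in> A" unfolding a_def using Apos by force
  qed
  moreover have "\<forall>x\<in>A. \<exists>n. a n = x"
  proof
    fix x assume x: "x \<in> A"
    then have "nat x \<in> B" unfolding B_def by blast
    then obtain n where "enumerate B n = nat x" using enumerate_Ex[OF infB] by blast
    then have "a n = x" unfolding a_def using x Apos by force
    then show "\<exists>n. a n = x" by blast
  qed
  ultimately show ?thesis using that by blast
qed

lemma count_enum:
  assumes sm: "strict_mono (a :: nat \<Rightarrow> int)" and aA: "\<forall>n. a n \<in> A" and surj: "\<forall>x\<in>A. \<exists>n. a n = x"
  shows "count_fn A (real_of_int (a n)) = n + 1"
proof -
  have "{b \<in> A. real_of_int b \<le> real_of_int (a n)} = a ` {0..n}"
  proof
    show "{b \<in> A. real_of_int b \<le> real_of_int (a n)} \<subseteq> a ` {0..n}"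
    proof
      fix b assume "b \<in> {b \<in> A. real_of_int b \<le> real_of_int (a n)}"
      then have b: "b \<in> A" "b \<le> a n" by auto
      then obtain i where i: "a i = b" using surj by blast
      then have "i \<le> n" using b sm by (metis strict_mono_less_eq)
      then show "b \<in> a ` {0..n}" using i by auto
    qed
    show "a ` {0..n} \<subseteq> {b \<in> A. real_of_int b \<le> real_of_int (a n)}"
      using aA sm by (auto simp: strict_mono_less_eq)
  qed
  moreover have "card (a ` {0..n}) = n + 1"
    using strict_mono_imp_inj_on[OF sm] by (simp add: card_image inj_on_subset)
  ultimately show ?thesis unfolding count_fn_def by simp
qed

lemma dyadic_split:
  fixes f :: "nat \<Rightarrow> real"
  shows "(\<Sum>k\<in>{k0..<k0+d}. \<Sum>j\<in>{2^k..<2^Suc k}. f j) = (\<Sum>j\<in>{2^k0..<2^(k0+d)}. f j)"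
proof (induction d)
  case 0 then show ?case by simp
next
  case (Suc d)
  have "(\<Sum>k\<in>{k0..<k0+Suc d}. \<Sum>j\<in>{2^k..<2^Suc k}. f j)
      = (\<Sum>k\<in>{k0..<k0+d}. \<Sum>j\<in>{2^k..<2^Suc k}. f j) + (\<Sum>j\<in>{2^(k0+d)..<2^Suc (k0+d)}. f j)"
    by simp
  also have "\<dots> = (\<Sum>j\<in>{2^k0..<2^(k0+d)}. f j) + (\<Sum>j\<in>{2^(k0+d)..<2^(k0+Suc d)}. f j)"
    using Suc by simp
  also have "\<dots> = (\<Sum>j\<in>{2^k0..<2^(k0+Suc d)}. f j)"
    by (rule sum.atLeastLessThan_concat) (simp_all add: power_increasing)
  finally show ?case .
qed

lemma hyp_to_bound:
  fixes C c ar :: real and n h :: nat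
  assumes h1: "1 \<le> h" and C: "0 < C" and cC: "C ^ h = c"
    and ar: "3 \<le> ar" and f: "C < real (n+1) * (ar * ln ar) powr (1 / real h) / ar"
  shows "c * ar ^ (h-1) < real (n+1) ^ h * ln ar"
proof -
  have arp: "0 < ar" using ar by simp
  have L: "0 < ln ar" using ar by simp
  define y where "y = ar * ln ar"
  have y: "0 < y" unfolding y_def using arp L by simp
  have "C * ar < real (n+1) * y powr (1 / real h)" using f arp unfolding y_def by (simp add: pos_less_divide_eq)
  then have "(C * ar) ^ h < (real (n+1) * y powr (1 / real h)) ^ h"
    using C arp h1 by (intro power_strict_mono) auto
  also have "\<dots> = real (n+1) ^ h * (y powr (1 / real h)) ^ h" by (simp add: power_mult_distrib)
  also have "(y powr (1 / real h)) ^ h = y"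
  proof -
    have "(y powr (1 / real h)) ^ h = (y powr (1 / real h)) powr (real h)"
      using y by (simp add: powr_realpow)
    also have "\<dots> = y powr (1 / real h * real h)" by (simp add: powr_powr)
    also have "\<dots> = y" using h1 y by simp
    finally show ?thesis .
  qed
  finally have "c * ar ^ h < real (n+1) ^ h * y" using cC by (simp add: power_mult_distrib)
  moreover have "ar ^ h = ar ^ (h-1) * ar"
  proof -
    have "h = Suc (h-1)" using h1 by simp
    then show ?thesis using power_Suc2[of ar "h-1"] by simp
  qed
  ultimately have "(c * ar ^ (h-1)) * ar < (real (n+1) ^ h * ln ar) * ar" unfolding y_def by (simp add: ac_simps)
  then show ?thesis using arp by simp
qed

lemma ln_bound_n:
  fixes c ar :: real and n h :: nat
  assumes c: "1 \<le> c" and h2: "2 \<le> h" and ar: "1 \<le> ar" and n: "3 \<le> n"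
    and hyp: "c * ar ^ (h-1) \<le> real (n+1) ^ h * ln ar"
  shows "ln ar \<le> (4 * real h + 2) * ln (real n)"
proof -
  have "ar ^ 1 \<le> ar ^ (h-1)" using ar h2 by (intro power_increasing) auto
  then have "ar \<le> ar ^ (h-1)" by simp
  also have "\<dots> \<le> c * ar ^ (h-1)" using c ar by (simp add: mult_le_cancel_right1 one_le_power)
  finally have "ar \<le> real (n+1) ^ h * ln ar" using hyp by linarith
  then have "ln ar \<le> 2 * ln (2 * real (n+1) ^ h)"
    by (intro ln_crude ar) (simp_all add: one_le_power)
  also have "\<dots> = 2 * ln 2 + 2 * real h * ln (real (n+1))"
    by (simp add: ln_mult ln_realpow)
  also have "\<dots> \<le> 2 * ln (real n) + 2 * real h * (2 * ln (real n))"
  proof -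
    have "ln 2 \<le> ln (real n)" using n by simp
    moreover have "ln (real (n+1)) \<le> 2 * ln (real n)"
    proof -
      have "3 * n \<le> n * n" using mult_le_mono1[of 3 n n] n by simp
      then have "n + 1 \<le> n * n" using n by linarith
      then have "real (n+1) \<le> real n ^ 2" unfolding power2_eq_square by (metis of_nat_le_iff of_nat_mult)
      then have "ln (real (n+1)) \<le> ln (real n ^ 2)" using n by (subst ln_le_cancel_iff) auto
      then show ?thesis using n by (simp add: ln_realpow)
    qed
    ultimately show ?thesis by (intro add_mono mult_left_mono) auto
  qed
  also have "\<dots> = (4 * real h + 2) * ln (real n)" by (simp add: algebra_simps)
  finally show ?thesis .
qed

lemma b_ge_1: "1 \<le> (2 * real q) ^ q"
proof (cases "q = 0")
  case True then show ?thesis by simp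
next
  case False
  then have "1 \<le> 2 * real q" by simp
  then show ?thesis by (rule one_le_power)
qed

lemma block_final:
  fixes ar :: "nat \<Rightarrow> real" and c \<alpha> :: real and m h :: nat
  assumes sm: "strict_mono ar" and nn: "\<forall>n. 0 \<le> ar n" and h2: "2 \<le> h" and c: "0 < c" and \<alpha>: "0 < \<alpha>"
    and m3: "3 \<le> m" and lnm: "2 * real h \<le> ln (real m)"
    and hyp3: "c * ar (3*m) ^ (h-1) \<le> real (3*m+1) ^ h * ln (ar (3*m))"
    and lnb: "ln (ar (3*m)) \<le> \<alpha> * ln (real (3*m))"
  shows "c / (2^(h+2) * ((2 * real (h-2)) ^ (h-2)) * \<alpha> * 4^h)
    \<le> (\<Sum>j\<in>{m..<2*m}. \<Sum>r\<in>{1..j}. real ((r-1) choose (h-2)) / (ar (j+r) - ar j) ^ (h-1))"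
proof -
  define b where "b = (2 * real (h-2)) ^ (h-2)"
  have b1: "1 \<le> b" unfolding b_def by (rule b_ge_1)
  define A3 where "A3 = ar (3*m)"
  have "ar 0 < ar (3*m)" using sm m3 unfolding strict_mono_def by simp
  then have A3: "0 < A3" unfolding A3_def using nn by (smt (verit))
  define T where "T = (real m / 2) * (real m / (2 * A3)) ^ (h-1)"
  have T0: "0 \<le> T" unfolding T_def using A3 by simp
  have "(\<Sum>r\<in>{1..m}. real ((r-1) choose (h-2)) * ((real m / 2) * (real m / (2 * (real r * ar (3*m)))) ^ (h-1)))
      \<le> (\<Sum>j\<in>{m..<2*m}. \<Sum>r\<in>{1..j}. real ((r-1) choose (h-2)) / (ar (j+r) - ar j) ^ (h-1))"
    by (rule block_bound[OF sm nn]) (use m3 in simp)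
  moreover have "(\<Sum>r\<in>{1..m}. real ((r-1) choose (h-2)) * ((real m / 2) * (real m / (2 * (real r * ar (3*m)))) ^ (h-1)))
      = T * (\<Sum>r\<in>{1..m}. real ((r-1) choose (h-2)) / real r ^ (h-1))"
    unfolding sum_distrib_left
  proof (rule sum.cong[OF refl])
    fix r assume "r \<in> {1..m}"
    then have r: "0 < real r" by simp
    have "real m / (2 * (real r * A3)) = (real m / (2 * A3)) / real r" by (simp add: field_simps)
    then have "(real m / (2 * (real r * A3))) ^ (h-1) = (real m / (2 * A3)) ^ (h-1) / real r ^ (h-1)"
      by (simp only: power_divide)
    moreover have gen: "\<And>C u v w::real. C * (u * (v / w)) = (u * v) * (C / w)"
      by (simp add: divide_inverse ac_simps)
    ultimately show "real ((r-1) choose (h-2)) * ((real m / 2) * (real m / (2 * (real r * ar (3*m)))) ^ (h-1))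
        = T * (real ((r-1) choose (h-2)) / real r ^ (h-1))"
      unfolding T_def A3_def[symmetric] by (simp only: gen)
  qed
  moreover have "T * (ln (real m) / (2 * b)) \<le> T * (\<Sum>r\<in>{1..m}. real ((r-1) choose (h-2)) / real r ^ (h-1))"
    using binom_harm[OF lnm h2] T0 unfolding b_def by (intro mult_left_mono) auto
  ultimately have low: "T * (ln (real m) / (2 * b)) \<le> (\<Sum>j\<in>{m..<2*m}. \<Sum>r\<in>{1..j}. real ((r-1) choose (h-2)) / (ar (j+r) - ar j) ^ (h-1))"
    by linarith
  define P where "P = A3 ^ (h-1)"
  define L where "L = ln (real m)"
  define M where "M = real m ^ h"
  have P: "0 < P" unfolding P_def using A3 by simp
  have L: "0 < L" unfolding L_def using m3 by simp
  have M: "0 < M" unfolding M_def using m3 by simp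
  have hS: "h = Suc (h-1)" using h2 by simp
  have Teq: "T = M / (2^h * P)"
  proof -
    have "T = (real m / 2) * (real m ^ (h-1) / (2 ^ (h-1) * P))"
      unfolding T_def P_def by (simp add: power_divide power_mult_distrib)
    also have "\<dots> = (real m * real m ^ (h-1)) / (2 * 2 ^ (h-1) * P)" by (simp add: field_simps)
    also have "\<dots> = M / (2^h * P)" unfolding M_def by (subst (1 2) hS) simp
    finally show ?thesis .
  qed
  have lnA3: "0 < ln A3"
  proof -
    have "0 < c * P" using c P by simp
    then have "0 < real (3*m+1) ^ h * ln A3" using hyp3 unfolding P_def A3_def by linarith
    then show ?thesis by (simp add: zero_less_mult_iff)
  qed
  have l3: "ln (real (3*m)) \<le> 2 * L"
  proof -
    have "ln (real (3*m)) = ln 3 + L" unfolding L_def using m3 by (simp add: ln_mult)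
    moreover have "ln 3 \<le> L" unfolding L_def using m3 by simp
    ultimately show ?thesis by simp
  qed
  have p4: "real (3*m+1) ^ h \<le> 4^h * M"
  proof -
    have "real (3*m+1) \<le> 4 * real m" using m3 by simp
    then have "real (3*m+1) ^ h \<le> (4 * real m) ^ h" by (intro power_mono) auto
    then show ?thesis unfolding M_def by (simp add: power_mult_distrib)
  qed
  have key: "c * P \<le> 2 * \<alpha> * 4^h * M * L"
  proof -
    have "c * P \<le> real (3*m+1) ^ h * ln A3" using hyp3 unfolding P_def A3_def .
    also have "\<dots> \<le> (4^h * M) * ln A3" using p4 lnA3 by (intro mult_right_mono) auto
    also have "\<dots> \<le> (4^h * M) * (\<alpha> * (2 * L))"
    proof (rule mult_left_mono)
      show "ln A3 \<le> \<alpha> * (2 * L)" using lnb l3 \<alpha> unfolding A3_def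
        by (smt (verit) mult_left_mono)
    qed (use M in simp)
    finally show ?thesis by (simp add: ac_simps)
  qed
  have "c / (2^(h+2) * b * \<alpha> * 4^h) = (c * P) / (2^(h+2) * b * \<alpha> * 4^h * P)" using P by simp
  also have "\<dots> \<le> (2 * \<alpha> * 4^h * M * L) / (2^(h+2) * b * \<alpha> * 4^h * P)"
    using key P b1 \<alpha> by (intro divide_right_mono) auto
  also have "\<dots> = T * (L / (2 * b))" unfolding Teq using \<alpha> b1 P by (simp add: field_simps power_add)
  finally show ?thesis using low unfolding b_def L_def by linarith
qed

lemma int_strict_mono_ge:
  fixes a :: "nat \<Rightarrow> int"
  assumes "strict_mono a"
  shows "a 0 + int n \<le> a n"
proof (induction n)
  case 0 then show ?case by simp
next
  case (Suc n)
  have "a n < a (Suc n)" using assms unfolding strict_mono_def by simp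
  then show ?case using Suc by simp
qed

theorem theorem3:
  fixes g h :: nat
  assumes "2 \<le> h" and "h \<le> g"
  shows "\<exists>C::real. C > 0 \<and>
    (\<forall>A :: int set. A \<subseteq> {0<..} \<longrightarrow> infinite A \<longrightarrow> Ch_set h g A \<longrightarrow>
       Liminf at_top (\<lambda>x::real. ereal (real (count_fn A x) * (x * ln x) powr (1 / real h) / x))
         \<le> ereal C)"
proof -
  have h2: "2 \<le> h" and g1: "1 \<le> g" using assms by auto
  define b :: real where "b = (2 * real (h-2)) ^ (h-2)"
  define \<alpha> :: real where "\<alpha> = 4 * real h + 2"
  define \<gamma> :: real where "\<gamma> = 1 / (2^(h+2) * b * \<alpha> * 4^h)"
  define K :: real where "K = real (g - 1)"
  define c :: real where "c = max 1 ((2 * K * \<alpha> + 1) / \<gamma>)"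
  define C :: real where "C = c powr (1 / real h)"
  have b1: "1 \<le> b" unfolding b_def by (rule b_ge_1)
  have \<alpha>1: "1 \<le> \<alpha>" unfolding \<alpha>_def by simp
  have \<gamma>0: "0 < \<gamma>" unfolding \<gamma>_def using b1 \<alpha>1 by simp
  have K0: "0 \<le> K" unfolding K_def by simp
  have c1: "1 \<le> c" unfolding c_def by simp
  have c\<gamma>: "2 * K * \<alpha> + 1 \<le> c * \<gamma>"
  proof -
    have "(2 * K * \<alpha> + 1) / \<gamma> \<le> c" unfolding c_def by simp
    then show ?thesis using \<gamma>0 by (simp add: pos_divide_le_eq)
  qed
  have C0: "0 < C" unfolding C_def using c1 by simp
  have Ch_eq: "C ^ h = c"
  proof -
    have "C ^ h = C powr real h" using C0 by (simp add: powr_realpow)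
    also have "\<dots> = c powr (1 / real h * real h)" unfolding C_def by (simp add: powr_powr)
    also have "\<dots> = c" using h2 c1 by simp
    finally show ?thesis .
  qed
  show ?thesis
  proof (intro exI conjI allI impI)
    show "0 < C" by (rule C0)
    fix A :: "int set"
    assume Apos: "A \<subseteq> {0<..}" and inf: "infinite A" and Ch: "Ch_set h g A"
    let ?f = "\<lambda>x::real. real (count_fn A x) * (x * ln x) powr (1 / real h) / x"
    show "Liminf at_top (\<lambda>x. ereal (?f x)) \<le> ereal C"
    proof (rule ccontr)
      assume "\<not> Liminf at_top (\<lambda>x. ereal (?f x)) \<le> ereal C"
      then have "ereal C < Liminf at_top (\<lambda>x. ereal (?f x))" by simp
      then have "eventually (\<lambda>x. ereal C < ereal (?f x)) at_top" by (rule less_LiminfD)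
      then obtain x0 where x0: "\<And>x. x \<ge> x0 \<Longrightarrow> C < ?f x"
        unfolding eventually_at_top_linorder by auto
      obtain a :: "nat \<Rightarrow> int" where sm: "strict_mono a" and aA: "\<forall>n. a n \<in> A"
        and surj: "\<forall>x\<in>A. \<exists>n. a n = x"
        using enum_exists[OF Apos inf] by blast
      define ar where "ar n = real_of_int (a n)" for n
      have a1: "1 \<le> a n" for n
      proof -
        have "a n \<in> {0<..}" using aA Apos by blast
        then show ?thesis by simp
      qed
      have apos: "\<forall>n. 0 \<le> a n" using a1 by (meson order_trans zero_le_one)
      have smar: "strict_mono ar" using sm unfolding ar_def strict_mono_def by simp
      have nnar: "\<forall>n. 0 \<le> ar n" using apos unfolding ar_def by simp
      have arge: "real n + 1 \<le> ar n" for n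
        using int_strict_mono_ge[OF sm, of n] a1[of 0] unfolding ar_def by linarith
      define n0 where "n0 = nat \<lceil>x0\<rceil> + 3"
      have hyp: "c * ar n ^ (h-1) < real (n+1) ^ h * ln (ar n)" if n: "n0 \<le> n" for n
      proof (rule hyp_to_bound[of h C c])
        show "1 \<le> h" using h2 by simp
        show "0 < C" by (rule C0)
        show "C ^ h = c" by (rule Ch_eq)
        have "real n \<ge> x0" using n unfolding n0_def by linarith
        then have ge: "ar n \<ge> x0" using arge[of n] by linarith
        show "3 \<le> ar n" using arge[of n] n unfolding n0_def by linarith
        have "C < ?f (ar n)" using x0[OF ge] .
        moreover have "count_fn A (ar n) = n + 1" unfolding ar_def by (rule count_enum[OF sm aA surj])
        ultimately show "C < real (n + 1) * (ar n * ln (ar n)) powr (1 / real h) / ar n" by simp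
      qed
      have lnb: "ln (ar n) \<le> \<alpha> * ln (real n)" if n: "n0 \<le> n" for n
        unfolding \<alpha>_def
        by (rule ln_bound_n[OF c1 h2]) (use arge[of n] n hyp[OF n] in \<open>auto simp: n0_def\<close>)
      define k0 where "k0 = n0 + 3 * h"
      define d where "d = k0 + 2"
      define blk where "blk m = (\<Sum>j\<in>{m..<2*m}. \<Sum>r\<in>{1..j}. real ((r-1) choose (h-2)) / (ar (j+r) - ar j) ^ (h-1))" for m
      have blk_low: "c * \<gamma> \<le> blk (2^k)" if k: "k0 \<le> k" for k
      proof -
        have kk: "k < 2^k" by (rule less_exp)
        have mn0: "n0 \<le> 2^k" using kk k unfolding k0_def by linarith
        have m3: "3 \<le> (2::nat)^k" using mn0 unfolding n0_def by linarith
        have "2 * real h \<le> real k * (2/3)" using k unfolding k0_def by simp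
        also have "\<dots> \<le> real k * ln 2" using ln2_ge_two_thirds by (intro mult_left_mono) auto
        also have "\<dots> = ln (real ((2::nat)^k))" by (simp add: ln_realpow)
        finally have lnm: "2 * real h \<le> ln (real ((2::nat)^k))" .
        have "c / (2^(h+2) * ((2 * real (h-2)) ^ (h-2)) * \<alpha> * 4^h) \<le> blk (2^k)"
          unfolding blk_def
        proof (rule block_final[OF smar nnar h2])
          show "0 < c" using c1 by simp
          show "0 < \<alpha>" using \<alpha>1 by simp
          show "3 \<le> (2::nat)^k" by (rule m3)
          show "2 * real h \<le> ln (real ((2::nat)^k))" by (rule lnm)
          show "c * ar (3 * 2^k) ^ (h-1) \<le> real (3 * 2^k + 1) ^ h * ln (ar (3 * 2^k))"
            using hyp[of "3 * 2^k"] mn0 by simp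
          show "ln (ar (3 * 2^k)) \<le> \<alpha> * ln (real (3 * 2^k))"
            using lnb[of "3 * 2^k"] mn0 by simp
        qed
        then show ?thesis unfolding \<gamma>_def b_def by simp
      qed
      define N0 where "N0 = (2::nat)^k0"
      define N1 where "N1 = (2::nat)^(k0+d)"
      have "real d * (c * \<gamma>) = (\<Sum>k\<in>{k0..<k0+d}. c * \<gamma>)" by simp
      also have "\<dots> \<le> (\<Sum>k\<in>{k0..<k0+d}. blk (2^k))" by (rule sum_mono) (use blk_low in auto)
      also have "\<dots> = (\<Sum>k\<in>{k0..<k0+d}. \<Sum>j\<in>{2^k..<2^Suc k}. \<Sum>r\<in>{1..j}. real ((r-1) choose (h-2)) / (ar (j+r) - ar j) ^ (h-1))"
        unfolding blk_def by (simp add: mult.commute)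
      also have "\<dots> = (\<Sum>j\<in>{N0..<N1}. \<Sum>r\<in>{1..j}. real ((r-1) choose (h-2)) / (ar (j+r) - ar j) ^ (h-1))"
        unfolding N0_def N1_def by (rule dyadic_split)
      also have "\<dots> = (\<Sum>j\<in>{N0..<N1}. \<Sum>r\<in>{1..j}. real ((r-1) choose (h-2)) / real_of_int (a (j+r) - a j) ^ (h-1))"
        unfolding ar_def by simp
      also have "\<dots> \<le> K * harm (nat (a (2*N1)))"
        unfolding K_def by (rule family_upper[OF Ch h2 g1 sm aA apos])
      also have "\<dots> \<le> K * (1 + ln (ar (2*N1)))"
      proof (rule mult_left_mono[OF _ K0])
        have "harm (nat (a (2*N1))) \<le> 1 + ln (real (nat (a (2*N1))))"
          by (rule harm_le_ln) (use a1[of "2*N1"] in linarith)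
        also have "real (nat (a (2*N1))) = ar (2*N1)" unfolding ar_def using apos by simp
        finally show "harm (nat (a (2*N1))) \<le> 1 + ln (ar (2*N1))" .
      qed
      also have "\<dots> \<le> K * (1 + \<alpha> * real (k0 + d + 1))"
      proof (rule mult_left_mono[OF _ K0])
        have N1ge: "n0 \<le> 2 * N1"
        proof -
          have "k0 + d < 2^(k0+d)" by (rule less_exp)
          then show ?thesis unfolding N1_def k0_def by linarith
        qed
        have "ln (ar (2*N1)) \<le> \<alpha> * ln (real (2*N1))" by (rule lnb[OF N1ge])
        also have "ln (real (2*N1)) = real (k0 + d + 1) * ln 2"
        proof -
          have e: "real (2*N1) = (2::real) ^ (k0 + d + 1)" unfolding N1_def by simp
          have "ln ((2::real) ^ (k0 + d + 1)) = real (k0 + d + 1) * ln 2" by (rule ln_realpow)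
          then show ?thesis unfolding e .
        qed
        also have "\<dots> \<le> real (k0 + d + 1)" using ln_2_less_1 by (intro mult_left_le) auto
        finally have "ln (ar (2*N1)) \<le> \<alpha> * real (k0 + d + 1)" using \<alpha>1 by (smt (verit) mult_left_mono)
        then show "1 + ln (ar (2*N1)) \<le> 1 + \<alpha> * real (k0 + d + 1)" by simp
      qed
      finally have up: "real d * (c * \<gamma>) \<le> K * (1 + \<alpha> * real (k0 + d + 1))" .
      have "real d * (2 * K * \<alpha> + 1) \<le> real d * (c * \<gamma>)" using c\<gamma> by (intro mult_left_mono) auto
      with up have ineq: "real d * (2 * K * \<alpha> + 1) \<le> K * (1 + \<alpha> * real (k0 + d + 1))" by linarith
      have KA: "K \<le> K * \<alpha>" using K0 \<alpha>1 by (simp add: mult_le_cancel_left1)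
      have "real d * (2 * K * \<alpha> + 1) = 2 * (K * \<alpha>) * real k0 + 4 * (K * \<alpha>) + real k0 + 2"
        unfolding d_def by (simp add: algebra_simps)
      moreover have "K * (1 + \<alpha> * real (k0 + d + 1)) = K + 2 * (K * \<alpha>) * real k0 + 3 * (K * \<alpha>)"
        unfolding d_def by (simp add: algebra_simps)
      ultimately show False using ineq KA by linarith
    qed
  qed
qed

end
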